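(* Let $\rho$ be a measure on $(0,\infty)$ such that $\mathfrak{A}(\rho)$ is definable. Then for $\alpha>-1$ and $b>0$, $$\int_{(b,\infty)}u^\alpha\,\mathfrak{A}(\rho)(\mathrm{d}u)\le C_1\int_{(b,\infty)}s^{\alpha+1/2}\rho(\mathrm{d}s)$$ and $$\int_{(0,b]}u^\alpha\,\mathfrak{A}(\rho)(\mathrm{d}u)\le C_2\Big(\int_{(0,b]}s^{\alpha+1/2}\rho(\mathrm{d}s)+\int_{(b,\infty)}s^{-1/2}\rho(\mathrm{d}s)\Big),$$ where $C_1$ and $C_2$ are constants independent of $\rho$.
   Context: For a measure $\rho$ on $(0,\infty)$, $\mathfrak{A}(\rho)$ is said to be definable if the function $u\mapsto\int_{(u,\infty)}\pi^{-1/2}(s-u)^{-1/2}\rho(\mathrm{d}s)$ is the Lebesgue density on $(0,\infty)$ of a measure $\sigma$ on $(0,\infty)$ that is locally finite (i.e. $\sigma((b,c))<\infty$ for $0<b<c<\infty$); then $\mathfrak{A}(\rho)$ denotes that measure. *)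

theory Defs
  imports "HOL-Analysis.Analysis"
begin

text \<open>A measure on (0,infinity) is modelled as a Borel measure on the reals
  giving no mass to {..0}.\<close>
definition measure_on_pos :: "real measure \<Rightarrow> bool" where
  "measure_on_pos \<rho> \<longleftrightarrow> sets \<rho> = sets borel \<and> emeasure \<rho> {..0} = 0"

definition abel_dens :: "real measure \<Rightarrow> real \<Rightarrow> ennreal" where
  "abel_dens \<rho> u = (\<integral>\<^sup>+ s. indicator {u<..} s * ennreal (1 / (sqrt pi * sqrt (s - u))) \<partial>\<rho>)"

definition frakA :: "real measure \<Rightarrow> real measure" where
  "frakA \<rho> = density lborel (\<lambda>u. indicator {0<..} u * abel_dens \<rho> u)"

definition frakA_definable :: "real measure \<Rightarrow> bool" where
  "frakA_definable \<rho> \<longleftrightarrow>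
     (\<forall>b c. 0 < b \<longrightarrow> b < c \<longrightarrow> emeasure (frakA \<rho>) {b<..<c} < \<infinity>)"

end

theory Submission
  imports Defs
begin


definition kern :: "real \<Rightarrow> real \<Rightarrow> ennreal" where
  "kern u s = indicator {u<..} s * ennreal (1 / (sqrt pi * sqrt (s - u)))"

lemma abel_dens_kern: "abel_dens \<rho> u = (\<integral>\<^sup>+ s. kern u s \<partial>\<rho>)"
  unfolding abel_dens_def kern_def ..

lemma kern_alt: "kern u s = (if u < s then ennreal (1 / (sqrt pi * sqrt (s - u))) else 0)"
  by (simp add: kern_def)

lemma kern_meas2: "(\<lambda>(u,s). kern u s) \<in> borel_measurable (borel \<Otimes>\<^sub>M borel)"
  unfolding kern_alt by measurable

lemma kern_meas: assumes "sets \<rho> = sets borel" shows "kern u \<in> borel_measurable \<rho>"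
  using measurable_cong_sets[OF assms refl]
  unfolding kern_def by (simp add: measurable_cong_sets[OF assms refl]) measurable

lemma kern_liminf:
  assumes x: "x \<longlonglongrightarrow> u0"
  shows "kern u0 s \<le> liminf (\<lambda>n. kern (x n) s)"
proof (cases "u0 < s")
  case False thus ?thesis by (simp add: kern_def)
next
  case True
  define f where "f t = ennreal (1 / (sqrt pi * sqrt (s - t)))" for t
  have ev: "eventually (\<lambda>n. x n < s) sequentially"
    using x True by (simp add: order_tendstoD(2))
  have "(\<lambda>n. f (x n)) \<longlonglongrightarrow> f u0"
    unfolding f_def by (intro tendsto_intros x) (use True in auto)
  hence "(\<lambda>n. kern (x n) s) \<longlonglongrightarrow> f u0"
    by (rule Lim_transform_eventually) (use ev in \<open>auto elim!: eventually_mono simp: kern_def f_def\<close>)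
  hence "liminf (\<lambda>n. kern (x n) s) = f u0" by (intro lim_imp_Liminf) auto
  thus ?thesis using True by (simp add: kern_def f_def)
qed

lemma abel_closed:
  assumes "sets \<rho> = sets borel"
  shows "closed {u. abel_dens \<rho> u \<le> t}"
  unfolding closed_sequential_limits
proof (intro allI impI, elim conjE)
  fix x l assume xs: "\<forall>n. x n \<in> {u. abel_dens \<rho> u \<le> t}" and x: "x \<longlonglongrightarrow> l"
  have "abel_dens \<rho> l \<le> (\<integral>\<^sup>+ s. liminf (\<lambda>n. kern (x n) s) \<partial>\<rho>)"
    unfolding abel_dens_kern by (intro nn_integral_mono kern_liminf x)
  also have "\<dots> \<le> liminf (\<lambda>n. abel_dens \<rho> (x n))"
    unfolding abel_dens_kern by (intro nn_integral_liminf kern_meas assms)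
  also have "\<dots> \<le> liminf (\<lambda>n. t)"
    using xs by (intro Liminf_mono always_eventually) simp
  also have "\<dots> = t" by (simp add: Liminf_const)
  finally show "l \<in> {u. abel_dens \<rho> u \<le> t}" by simp
qed

lemma abel_meas:
  assumes "sets \<rho> = sets borel"
  shows "abel_dens \<rho> \<in> borel_measurable borel"
proof (rule borel_measurableI_greater)
  fix y
  have "{x \<in> space borel. y < abel_dens \<rho> x} = - {u. abel_dens \<rho> u \<le> y}" by auto
  also have "open \<dots>" using abel_closed[OF assms] by auto
  finally show "{x \<in> space borel. y < abel_dens \<rho> x} \<in> sets borel" by simp
qed

lemma D_meas:
  assumes "sets \<rho> = sets borel"
  shows "(\<lambda>u. indicator {0<..} u * abel_dens \<rho> u) \<in> borel_measurable lborel"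
  using abel_meas[OF assms] by simp

lemma finite_point:
  assumes mp: "measure_on_pos \<rho>" and df: "frakA_definable \<rho>" and ac: "0 < a" "a < c"
  shows "\<exists>u\<in>{a<..<c}. abel_dens \<rho> u < \<infinity>"
proof (rule ccontr)
  assume "\<not> ?thesis"
  hence inf: "\<And>u. u \<in> {a<..<c} \<Longrightarrow> abel_dens \<rho> u = \<infinity>"
    by (simp add: less_top[symmetric])
  have s: "sets \<rho> = sets borel" using mp by (simp add: measure_on_pos_def)
  have "emeasure (frakA \<rho>) {a<..<c} = (\<integral>\<^sup>+ x. (indicator {0<..} x * abel_dens \<rho> x) * indicator {a<..<c} x \<partial>lborel)"
    unfolding frakA_def by (rule emeasure_density) (use D_meas[OF s] in auto)
  also have "\<dots> = (\<integral>\<^sup>+ x. \<infinity> * indicator {a<..<c} x \<partial>lborel)"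
    proof (rule nn_integral_cong)
    fix x show "indicator {0<..} x * abel_dens \<rho> x * indicator {a<..<c} x = \<infinity> * indicator {a<..<c} x"
      using inf[of x] ac by (cases "x \<in> {a<..<c}") auto
  qed
  also have "\<dots> = \<infinity> * emeasure lborel {a<..<c}" by (rule nn_integral_cmult_indicator) simp
  also have "\<dots> = \<infinity>" using ac by (simp add: ennreal_top_mult)
  finally have "emeasure (frakA \<rho>) {a<..<c} = \<infinity>" .
  moreover have "emeasure (frakA \<rho>) {a<..<c} < \<infinity>" using df ac unfolding frakA_definable_def by blast
  ultimately show False by simp
qed

lemma rho_bound:
  assumes s: "sets \<rho> = sets borel"
  shows "emeasure \<rho> {u<..<u+1} \<le> ennreal (sqrt pi) * abel_dens \<rho> u"
proof -
  have "emeasure \<rho> {u<..<u+1} = (\<integral>\<^sup>+ x. indicator {u<..<u+1} x \<partial>\<rho>)"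
    using s by (subst nn_integral_indicator) auto
  also have "\<dots> \<le> (\<integral>\<^sup>+ x. ennreal (sqrt pi) * kern u x \<partial>\<rho>)"
  proof (rule nn_integral_mono)
    fix x
    show "indicator {u<..<u+1} x \<le> ennreal (sqrt pi) * kern u x"
    proof (cases "x \<in> {u<..<u+1}")
      case True
      hence "sqrt (x - u) \<le> 1" by auto
      moreover have "sqrt (x-u) > 0" using True by auto
      ultimately have "1 \<le> 1 / sqrt (x - u)" by (simp add: field_simps)
      moreover have "sqrt pi * (1 / (sqrt pi * sqrt (x - u))) = 1 / sqrt (x - u)" by simp
      ultimately show ?thesis using True
        by (simp add: kern_def ennreal_mult'[symmetric] del: ennreal_mult')
    qed simp
  qed
  also have "\<dots> = ennreal (sqrt pi) * abel_dens \<rho> u"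
    unfolding abel_dens_kern by (rule nn_integral_cmult) (rule kern_meas[OF s])
  finally show ?thesis .
qed

lemma sigma_fin:
  assumes mp: "measure_on_pos \<rho>" and df: "frakA_definable \<rho>"
  shows "sigma_finite_measure \<rho>"
proof
  have s: "sets \<rho> = sets borel" and z: "emeasure \<rho> {..0} = 0" using mp by (auto simp: measure_on_pos_def)
  have sp: "space \<rho> = UNIV" using sets_eq_imp_space_eq[OF s] by simp
  define E where "E = {u. 0 < u \<and> abel_dens \<rho> u < \<infinity>}"
  define F where "F = (\<lambda>u. {u<..<u+1}) ` E"
  have UF: "\<Union>F = {0<..}"
  proof
    show "\<Union>F \<subseteq> {0<..}" unfolding F_def E_def by auto
    show "{0<..} \<subseteq> \<Union>F"
    proof
      fix x :: real assume "x \<in> {0<..}"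
      hence x: "x > 0" by simp
      define a where "a = max (x/2) (x-1)"
      have "0 < a" "a < x" using x by (auto simp: a_def)
      then obtain u where u: "u \<in> {a<..<x}" "abel_dens \<rho> u < \<infinity>" using finite_point[OF mp df] by blast
      have "u > 0" "x < u + 1" using u x by (auto simp: a_def)
      thus "x \<in> \<Union>F" using u unfolding F_def E_def by auto
    qed
  qed
  have opF: "\<And>S. S \<in> F \<Longrightarrow> open S" unfolding F_def by auto
  obtain F' where F': "F' \<subseteq> F" "countable F'" "\<Union>F' = \<Union>F"
    by (rule Lindelof[OF opF], blast)
  show "\<exists>A. countable A \<and> A \<subseteq> sets \<rho> \<and> \<Union> A = space \<rho> \<and> (\<forall>a\<in>A. emeasure \<rho> a \<noteq> \<infinity>)"
  proof (intro exI[of _ "insert {..0} F'"] conjI ballI)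
    show "countable (insert {..0} F')" using F' by simp
    show "insert {..0} F' \<subseteq> sets \<rho>" using F' s unfolding F_def by auto
    show "\<Union>(insert {..0} F') = space \<rho>" proof -
      have "\<Union>(insert {..0} F') = {..0} \<union> {0<..}" using F'(3) UF by simp
      also have "\<dots> = UNIV" by auto
      finally show ?thesis using sp by simp
    qed
    fix A assume "A \<in> insert {..0} F'"
    then consider "A = {..0}" | u where "u \<in> E" "A = {u<..<u+1}" using F' unfolding F_def by auto
    thus "emeasure \<rho> A \<noteq> \<infinity>"
    proof cases
      case 1 thus ?thesis using z by simp
    next
      case (2 u)
      have "emeasure \<rho> A \<le> ennreal (sqrt pi) * abel_dens \<rho> u" using 2 rho_bound[OF s] by simp
      also have "\<dots> < \<infinity>" using 2 unfolding E_def by (simp add: ennreal_mult_less_top)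
      finally show ?thesis by simp
    qed
  qed
qed



lemma I1:
  assumes "\<alpha> > -1" "c \<ge> 0"
  shows "(\<integral>\<^sup>+u. ennreal (indicator {0..c} u * u powr \<alpha>) \<partial>lborel) = ennreal (c powr (\<alpha>+1)/(\<alpha>+1))"
  using nn_integral_has_integral_lebesgue[OF _ has_integral_powr_from_0[OF assms]] by simp

lemma I2:
  assumes "s > 0"
  shows "(\<integral>\<^sup>+u. ennreal (indicator {s/2..s} u * (1 / sqrt (s - u))) \<partial>lborel) = ennreal (2 * sqrt (s/2))"
proof -
  have "((\<lambda>u. 1 / sqrt (s - u)) has_integral ((\<lambda>u. -2 * sqrt (s - u)) s - (\<lambda>u. -2 * sqrt (s - u)) (s/2))) {s/2..s}"
  proof (rule fundamental_theorem_of_calculus_interior)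
    show "s/2 \<le> s" using assms by simp
    show "continuous_on {s/2..s} (\<lambda>u. -2 * sqrt (s - u))" by (intro continuous_intros)
    fix x assume x: "x \<in> {s/2<..<s}"
    have "((\<lambda>u. -2 * sqrt (s - u)) has_real_derivative (1 / sqrt (s - x))) (at x)"
      using x by (auto intro!: derivative_eq_intros simp: field_simps)
    thus "((\<lambda>u. -2 * sqrt (s - u)) has_vector_derivative (1 / sqrt (s - x))) (at x)"
      by (simp add: has_real_derivative_iff_has_vector_derivative)
  qed
  hence "((\<lambda>u. 1 / sqrt (s - u)) has_integral (2 * sqrt (s/2))) {s/2..s}" by simp
  from nn_integral_has_integral_lebesgue[OF _ this] show ?thesis by simp
qed

definition KK :: "real \<Rightarrow> real" where
  "KK \<alpha> = sqrt 2 * (1/2) powr (\<alpha>+1) / (\<alpha>+1) + sqrt 2 * max 1 (2 powr (-\<alpha>))"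

lemma pow_bound:
  fixes s u \<alpha> :: real
  assumes "0 < s" "s/2 \<le> u" "u \<le> s"
  shows "u powr \<alpha> \<le> max 1 (2 powr (-\<alpha>)) * s powr \<alpha>"
proof (cases "\<alpha> \<ge> 0")
  case True
  have "u powr \<alpha> \<le> s powr \<alpha>" using assms True by (intro powr_mono2) auto
  also have "\<dots> \<le> max 1 (2 powr (-\<alpha>)) * s powr \<alpha>"
    using mult_right_mono[of 1 "max 1 (2 powr (-\<alpha>))" "s powr \<alpha>"] by simp
  finally show ?thesis .
next
  case False
  have "u powr \<alpha> \<le> (s/2) powr \<alpha>" using assms False by (intro powr_mono2') auto
  also have "\<dots> = 2 powr (-\<alpha>) * s powr \<alpha>"
    using assms by (simp add: powr_divide powr_minus field_simps)
  also have "\<dots> \<le> max 1 (2 powr (-\<alpha>)) * s powr \<alpha>"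
    using mult_right_mono[of "2 powr (-\<alpha>)" "max 1 (2 powr (-\<alpha>))" "s powr \<alpha>"] by simp
  finally show ?thesis .
qed

lemma L1:
  assumes a: "\<alpha> > -1" and s: "s > 0"
  shows "(\<integral>\<^sup>+u. ennreal (indicator {0<..<s} u * (u powr \<alpha> / sqrt (s - u))) \<partial>lborel)
           \<le> ennreal (KK \<alpha> * s powr (\<alpha> + 1/2))"
proof -
  define A where "A = sqrt 2 / sqrt s"
  define M where "M = max 1 (2 powr (-\<alpha>))"
  define B where "B = M * s powr \<alpha>"
  have A0: "A \<ge> 0" and B0: "B \<ge> 0" using s by (auto simp: A_def B_def M_def)
  have nn1: "indicator {s/2..s} u * (1 / sqrt (s - u)) \<ge> 0" for u
    by (cases "u \<in> {s/2..s}") auto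
  have nn2: "indicator {0..s/2} u * u powr \<alpha> \<ge> 0" for u
    by (cases "u \<in> {0..s/2}") auto
  have pw: "indicator {0<..<s} u * (u powr \<alpha> / sqrt (s - u))
      \<le> A * (indicator {0..s/2} u * u powr \<alpha>) + B * (indicator {s/2..s} u * (1 / sqrt (s - u)))" for u
  proof -
    consider "u \<le> 0 \<or> u \<ge> s" | "0 < u" "u \<le> s/2" | "s/2 < u" "u < s" by linarith
    thus ?thesis
    proof cases
      case 1
      have "0 \<le> A * (indicator {0..s/2} u * u powr \<alpha>) + B * (indicator {s/2..s} u * (1 / sqrt (s - u)))"
        using A0 B0 nn1 nn2 by (meson add_nonneg_nonneg mult_nonneg_nonneg)
      thus ?thesis using 1 by (auto simp: indicator_def)
    next
      case 2
      have "sqrt s \<le> sqrt 2 * sqrt (s - u)" unfolding real_sqrt_mult[symmetric] using 2 by simp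
      hence "1 / sqrt (s - u) \<le> A" unfolding A_def using 2 s by (simp add: field_simps)
      hence "u powr \<alpha> / sqrt (s - u) \<le> A * u powr \<alpha>"
        using mult_left_mono[of "1 / sqrt (s - u)" A "u powr \<alpha>"] by (simp add: mult.commute)
      moreover have "0 \<le> B * (indicator {s/2..s} u * (1 / sqrt (s - u)))" using B0 2 by (auto simp: indicator_def)
      ultimately show ?thesis using 2 s by (auto simp: indicator_def)
    next
      case 3
      have "u powr \<alpha> \<le> B" unfolding B_def M_def using 3 s by (intro pow_bound) auto
      hence "u powr \<alpha> / sqrt (s - u) \<le> B * (1 / sqrt (s - u))"
        using 3 by (simp add: divide_right_mono)
      moreover have "0 \<le> A * (indicator {0..s/2} u * u powr \<alpha>)" using A0 by (auto simp: indicator_def)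
      ultimately show ?thesis using 3 s by (auto simp: indicator_def)
    qed
  qed
  have m1: "(\<lambda>u. ennreal (indicator {0..s/2} u * u powr \<alpha>)) \<in> borel_measurable lborel" by measurable
  have m2: "(\<lambda>u. ennreal (indicator {s/2..s} u * (1 / sqrt (s - u)))) \<in> borel_measurable lborel" by measurable
  have "(\<integral>\<^sup>+u. ennreal (indicator {0<..<s} u * (u powr \<alpha> / sqrt (s - u))) \<partial>lborel)
     \<le> (\<integral>\<^sup>+u. ennreal A * ennreal (indicator {0..s/2} u * u powr \<alpha>) + ennreal B * ennreal (indicator {s/2..s} u * (1 / sqrt (s - u))) \<partial>lborel)"
  proof (rule nn_integral_mono)
    fix u
    have "ennreal (indicator {0<..<s} u * (u powr \<alpha> / sqrt (s - u))) \<le>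
       ennreal (A * (indicator {0..s/2} u * u powr \<alpha>) + B * (indicator {s/2..s} u * (1 / sqrt (s - u))))"
      by (rule ennreal_leI[OF pw])
    also have "\<dots> = ennreal A * ennreal (indicator {0..s/2} u * u powr \<alpha>) + ennreal B * ennreal (indicator {s/2..s} u * (1 / sqrt (s - u)))"
      using ennreal_plus[OF mult_nonneg_nonneg[OF A0 nn2[of u]] mult_nonneg_nonneg[OF B0 nn1[of u]]]
      by (simp only: ennreal_mult[OF A0 nn2] ennreal_mult[OF B0 nn1])
    finally show "ennreal (indicator {0<..<s} u * (u powr \<alpha> / sqrt (s - u))) \<le> \<dots>" .
  qed
  also have "\<dots> = (\<integral>\<^sup>+u. ennreal A * ennreal (indicator {0..s/2} u * u powr \<alpha>) \<partial>lborel)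
        + (\<integral>\<^sup>+u. ennreal B * ennreal (indicator {s/2..s} u * (1 / sqrt (s - u))) \<partial>lborel)"
    by (rule nn_integral_add) (use m1 m2 in auto)
  also have "\<dots> = ennreal A * (\<integral>\<^sup>+u. ennreal (indicator {0..s/2} u * u powr \<alpha>) \<partial>lborel)
        + ennreal B * (\<integral>\<^sup>+u. ennreal (indicator {s/2..s} u * (1 / sqrt (s - u))) \<partial>lborel)"
    by (simp only: nn_integral_cmult[OF m1] nn_integral_cmult[OF m2])
  also have "\<dots> = ennreal (A * ((s/2) powr (\<alpha>+1)/(\<alpha>+1)) + B * (2 * sqrt (s/2)))"
  proof -
    have h: "s/2 \<ge> 0" using s by simp
    have p1: "(s/2) powr (\<alpha>+1)/(\<alpha>+1) \<ge> 0" using a by simp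
    have p2: "2 * sqrt (s/2) \<ge> 0" using s by simp
    show ?thesis
      unfolding I1[OF a h] I2[OF s] ennreal_mult[OF A0 p1, symmetric] ennreal_mult[OF B0 p2, symmetric]
      by (rule ennreal_plus[symmetric]) (use mult_nonneg_nonneg[OF A0 p1] mult_nonneg_nonneg[OF B0 p2] in auto)
  qed
  also have "A * ((s/2) powr (\<alpha>+1)/(\<alpha>+1)) + B * (2 * sqrt (s/2)) = KK \<alpha> * s powr (\<alpha> + 1/2)"
  proof -
    have e1: "(s/2) powr (\<alpha>+1) = (1/2) powr (\<alpha>+1) * s powr (\<alpha>+1)"
      using s by (simp add: powr_divide)
    have sq: "sqrt s = s powr (1/2)" using s by (simp add: powr_half_sqrt)
    have e2: "s powr (\<alpha>+1) = s powr (\<alpha>+1/2) * sqrt s"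
      unfolding sq powr_add[symmetric] by (simp add: add.commute)
    have e3: "s powr \<alpha> * sqrt s = s powr (\<alpha>+1/2)"
      unfolding sq powr_add[symmetric] by simp
    have e4: "2 * sqrt (s/2) = sqrt 2 * sqrt s"
      by (simp add: real_sqrt_divide field_simps)
    have "A * ((s/2) powr (\<alpha>+1)/(\<alpha>+1)) = sqrt 2 * (1/2) powr (\<alpha>+1) / (\<alpha>+1) * s powr (\<alpha>+1/2)"
      unfolding A_def e1 e2 using s by (simp add: field_simps)
    moreover have "B * (2 * sqrt (s/2)) = sqrt 2 * M * s powr (\<alpha>+1/2)"
      unfolding B_def e4 e3[symmetric] by (simp add: field_simps)
    ultimately show ?thesis unfolding KK_def M_def by (simp add: field_simps)
  qed
  finally show ?thesis .
qed

lemma KK_nonneg: "\<alpha> > -1 \<Longrightarrow> KK \<alpha> \<ge> 0"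
  unfolding KK_def by (intro add_nonneg_nonneg) auto

lemma inv_sqrt: "s > 0 \<Longrightarrow> 1 / sqrt s = s powr (-1/2)"
  by (simp add: powr_minus_divide powr_half_sqrt)

lemma L2:
  assumes a: "\<alpha> > -1" and b: "b > 0" and s: "2 * b \<le> s"
  shows "(\<integral>\<^sup>+u. ennreal (indicator {0<..b} u * (u powr \<alpha> / sqrt (s - u))) \<partial>lborel)
           \<le> ennreal (sqrt 2 * b powr (\<alpha>+1) / (\<alpha>+1) * s powr (-1/2))"
proof -
  define A where "A = sqrt 2 / sqrt s"
  have A0: "A \<ge> 0" using s b by (auto simp: A_def)
  have nn2: "indicator {0..b} u * u powr \<alpha> \<ge> 0" for u
    by (cases "u \<in> {0..b}") auto
  have m1: "(\<lambda>u. ennreal (indicator {0..b} u * u powr \<alpha>)) \<in> borel_measurable lborel" by measurable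
  have "(\<integral>\<^sup>+u. ennreal (indicator {0<..b} u * (u powr \<alpha> / sqrt (s - u))) \<partial>lborel)
      \<le> (\<integral>\<^sup>+u. ennreal A * ennreal (indicator {0..b} u * u powr \<alpha>) \<partial>lborel)"
  proof (rule nn_integral_mono)
    fix u
    have "indicator {0<..b} u * (u powr \<alpha> / sqrt (s - u)) \<le> A * (indicator {0..b} u * u powr \<alpha>)"
    proof (cases "u \<in> {0<..b}")
      case True
      have "sqrt s \<le> sqrt 2 * sqrt (s - u)" unfolding real_sqrt_mult[symmetric] using True s by simp
      hence "1 / sqrt (s - u) \<le> A" unfolding A_def using True s b by (simp add: field_simps)
      hence "u powr \<alpha> / sqrt (s - u) \<le> A * u powr \<alpha>"
        using mult_left_mono[of "1 / sqrt (s - u)" A "u powr \<alpha>"] by (simp add: mult.commute)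
      thus ?thesis using True by simp
    next
      case False thus ?thesis using A0 nn2[of u] by simp
    qed
    hence "ennreal (indicator {0<..b} u * (u powr \<alpha> / sqrt (s - u))) \<le> ennreal (A * (indicator {0..b} u * u powr \<alpha>))"
      by (rule ennreal_leI)
    thus "ennreal (indicator {0<..b} u * (u powr \<alpha> / sqrt (s - u))) \<le> ennreal A * ennreal (indicator {0..b} u * u powr \<alpha>)"
      by (simp only: ennreal_mult[OF A0 nn2])
  qed
  also have "\<dots> = ennreal A * ennreal (b powr (\<alpha>+1) / (\<alpha>+1))"
    using b by (simp only: nn_integral_cmult[OF m1] I1[OF a] less_imp_le)
  also have "\<dots> = ennreal (A * (b powr (\<alpha>+1) / (\<alpha>+1)))"
    by (rule ennreal_mult[symmetric]) (use a A0 in auto)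
  also have "A * (b powr (\<alpha>+1) / (\<alpha>+1)) = sqrt 2 * b powr (\<alpha>+1) / (\<alpha>+1) * s powr (-1/2)"
  proof -
    have e: "s powr (-1/2) = 1 / sqrt s" using inv_sqrt[of s] s b by simp
    show ?thesis unfolding A_def e by simp
  qed
  finally show ?thesis .
qed

definition K2 :: "real \<Rightarrow> real \<Rightarrow> real" where
  "K2 \<alpha> b = max (sqrt 2 * b powr (\<alpha>+1) / (\<alpha>+1)) (KK \<alpha> * (2*b) powr (\<alpha>+1))"

lemma L3:
  assumes a: "\<alpha> > -1" and b: "b > 0" and s: "b < s"
  shows "(\<integral>\<^sup>+u. ennreal (indicator {0<..b} u * (u powr \<alpha> / sqrt (s - u))) \<partial>lborel)
           \<le> ennreal (K2 \<alpha> b * s powr (-1/2))"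
proof (cases "2 * b \<le> s")
  case True
  have "(\<integral>\<^sup>+u. ennreal (indicator {0<..b} u * (u powr \<alpha> / sqrt (s - u))) \<partial>lborel)
           \<le> ennreal (sqrt 2 * b powr (\<alpha>+1) / (\<alpha>+1) * s powr (-1/2))" by (rule L2[OF a b True])
  also have "\<dots> \<le> ennreal (K2 \<alpha> b * s powr (-1/2))"
    unfolding K2_def by (intro ennreal_leI mult_right_mono) auto
  finally show ?thesis .
next
  case False
  have "(\<integral>\<^sup>+u. ennreal (indicator {0<..b} u * (u powr \<alpha> / sqrt (s - u))) \<partial>lborel)
     \<le> (\<integral>\<^sup>+u. ennreal (indicator {0<..<s} u * (u powr \<alpha> / sqrt (s - u))) \<partial>lborel)"
    by (intro nn_integral_mono ennreal_leI) (use s in \<open>auto simp: indicator_def\<close>)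
  also have "\<dots> \<le> ennreal (KK \<alpha> * s powr (\<alpha> + 1/2))" using L1[OF a] s b by simp
  also have "KK \<alpha> * s powr (\<alpha> + 1/2) = KK \<alpha> * s powr (\<alpha>+1) * s powr (-1/2)"
    unfolding mult.assoc powr_add[symmetric] by (rule arg_cong[where f="\<lambda>x. KK \<alpha> * s powr x"]) simp
  also have "\<dots> \<le> KK \<alpha> * (2*b) powr (\<alpha>+1) * s powr (-1/2)"
    using False s b a KK_nonneg[OF a] by (intro mult_right_mono mult_left_mono powr_mono2) auto
  also have "\<dots> \<le> K2 \<alpha> b * s powr (-1/2)"
    unfolding K2_def by (intro mult_right_mono) auto
  finally show ?thesis by (simp add: ennreal_leI)
qed



lemma kern_meas_raw[measurable (raw)]:
  assumes [measurable]: "f \<in> borel_measurable M" "g \<in> borel_measurable M"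
  shows "(\<lambda>x. kern (f x) (g x)) \<in> borel_measurable M"
  unfolding kern_alt by measurable

lemma P:
  "indicator {0<..} u * kern u s
     = ennreal (1 / sqrt pi) * ennreal (indicator {0<..<s} u * (1 / sqrt (s - u)))"
proof (cases "0 < u \<and> u < s")
  case True
  thus ?thesis by (simp add: kern_def ennreal_mult[symmetric])
qed (auto simp: kern_def indicator_def)

lemma G:
  assumes mp: "measure_on_pos \<rho>" and df: "frakA_definable \<rho>"
    and w[measurable]: "w \<in> borel_measurable borel"
  shows "(\<integral>\<^sup>+ u. w u \<partial>frakA \<rho>) = (\<integral>\<^sup>+ s. (\<integral>\<^sup>+ u. w u * (indicator {0<..} u * kern u s) \<partial>lborel) \<partial>\<rho>)"
proof -
  have s: "sets \<rho> = sets borel" using mp by (simp add: measure_on_pos_def)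
  interpret r: sigma_finite_measure \<rho> by (rule sigma_fin[OF mp df])
  interpret pair_sigma_finite lborel \<rho>
    by (intro pair_sigma_finite.intro lborel.sigma_finite_measure_axioms r.sigma_finite_measure_axioms)
  have "(\<integral>\<^sup>+ u. w u \<partial>frakA \<rho>) = (\<integral>\<^sup>+ u. (indicator {0<..} u * abel_dens \<rho> u) * w u \<partial>lborel)"
    unfolding frakA_def by (rule nn_integral_density) (use D_meas[OF s] in auto)
  also have "\<dots> = (\<integral>\<^sup>+ u. (\<integral>\<^sup>+ s. w u * (indicator {0<..} u * kern u s) \<partial>\<rho>) \<partial>lborel)"
  proof (rule nn_integral_cong)
    fix u
    have "(\<integral>\<^sup>+ s. w u * (indicator {0<..} u * kern u s) \<partial>\<rho>) = (\<integral>\<^sup>+ s. (w u * indicator {0<..} u) * kern u s \<partial>\<rho>)"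
      by (simp add: mult.assoc)
    also have "\<dots> = (w u * indicator {0<..} u) * abel_dens \<rho> u"
      unfolding abel_dens_kern by (rule nn_integral_cmult) (rule kern_meas[OF s])
    finally show "indicator {0<..} u * abel_dens \<rho> u * w u = (\<integral>\<^sup>+ s. w u * (indicator {0<..} u * kern u s) \<partial>\<rho>)"
      by (simp add: mult_ac)
  qed
  also have "\<dots> = (\<integral>\<^sup>+ s. (\<integral>\<^sup>+ u. w u * (indicator {0<..} u * kern u s) \<partial>lborel) \<partial>\<rho>)"
  proof (rule Fubini'[symmetric])
    have "(\<lambda>(u, s). w u * (indicator {0<..} u * kern u s)) \<in> borel_measurable (borel \<Otimes>\<^sub>M borel)"
      by measurable
    thus "(\<lambda>(u, s). w u * (indicator {0<..} u * kern u s)) \<in> borel_measurable (lborel \<Otimes>\<^sub>M \<rho>)"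
      by (subst measurable_cong_sets[OF sets_pair_measure_cong[OF sets_lborel s] refl])
  qed
  finally show ?thesis .
qed

lemma ineq1:
  assumes a: "\<alpha> > -1" and b: "b > 0" and mp: "measure_on_pos \<rho>" and df: "frakA_definable \<rho>"
  shows "(\<integral>\<^sup>+ u\<in>{b<..}. ennreal (u powr \<alpha>) \<partial>frakA \<rho>)
        \<le> ennreal (KK \<alpha> / sqrt pi) * (\<integral>\<^sup>+ s\<in>{b<..}. ennreal (s powr (\<alpha> + 1/2)) \<partial>\<rho>)"
proof -
  have sr: "sets \<rho> = sets borel" using mp by (simp add: measure_on_pos_def)
  have "(\<integral>\<^sup>+ u\<in>{b<..}. ennreal (u powr \<alpha>) \<partial>frakA \<rho>)
     = (\<integral>\<^sup>+ s. (\<integral>\<^sup>+ u. ennreal (u powr \<alpha>) * indicator {b<..} u * (indicator {0<..} u * kern u s) \<partial>lborel) \<partial>\<rho>)"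
    by (rule G[OF mp df]) measurable
  also have "\<dots> \<le> (\<integral>\<^sup>+ s. ennreal (KK \<alpha> / sqrt pi) * (ennreal (s powr (\<alpha> + 1/2)) * indicator {b<..} s) \<partial>\<rho>)"
  proof (rule nn_integral_mono)
    fix s
    have eq: "ennreal (u powr \<alpha>) * indicator {b<..} u * (indicator {0<..} u * kern u s)
       = ennreal (1 / sqrt pi) * ennreal (indicator {b<..} u * (indicator {0<..<s} u * (u powr \<alpha> / sqrt (s - u))))" for u
      unfolding P by (cases "u \<in> {b<..}"; cases "u \<in> {0<..<s}") (auto simp: ennreal_mult[symmetric] simp del: ennreal_mult)
    show "(\<integral>\<^sup>+ u. ennreal (u powr \<alpha>) * indicator {b<..} u * (indicator {0<..} u * kern u s) \<partial>lborel)
          \<le> ennreal (KK \<alpha> / sqrt pi) * (ennreal (s powr (\<alpha> + 1/2)) * indicator {b<..} s)"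
    proof (cases "b < s")
      case False
      have "(\<integral>\<^sup>+ u. ennreal (u powr \<alpha>) * indicator {b<..} u * (indicator {0<..} u * kern u s) \<partial>lborel) = (\<integral>\<^sup>+ u. 0 \<partial>(lborel::real measure))"
      proof (rule nn_integral_cong)
        fix u
        have z: "indicator {b<..} u * (indicator {0<..<s} u * (u powr \<alpha> / sqrt (s - u))) = (0::real)"
          using False by (cases "u \<in> {b<..}") auto
        show "ennreal (u powr \<alpha>) * indicator {b<..} u * (indicator {0<..} u * kern u s) = 0"
          unfolding eq by (simp only: z ennreal_0 mult_zero_right)
      qed
      thus ?thesis by simp
    next
      case True
      have "(\<integral>\<^sup>+ u. ennreal (u powr \<alpha>) * indicator {b<..} u * (indicator {0<..} u * kern u s) \<partial>lborel)
          \<le> (\<integral>\<^sup>+ u. ennreal (1 / sqrt pi) * ennreal (indicator {0<..<s} u * (u powr \<alpha> / sqrt (s - u))) \<partial>lborel)"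
        unfolding eq by (intro nn_integral_mono mult_left_mono ennreal_leI) (auto simp: indicator_def)
      also have "\<dots> = ennreal (1 / sqrt pi) * (\<integral>\<^sup>+ u. ennreal (indicator {0<..<s} u * (u powr \<alpha> / sqrt (s - u))) \<partial>lborel)"
        by (rule nn_integral_cmult) measurable
      also have "\<dots> \<le> ennreal (1 / sqrt pi) * ennreal (KK \<alpha> * s powr (\<alpha> + 1/2))"
        using L1[OF a, of s] True b by (intro mult_left_mono) auto
      also have "\<dots> = ennreal (KK \<alpha> / sqrt pi) * (ennreal (s powr (\<alpha> + 1/2)) * indicator {b<..} s)"
        using True KK_nonneg[OF a] by (simp add: ennreal_mult[symmetric] del: ennreal_mult)
      finally show ?thesis .
    qed
  qed
  also have "\<dots> = ennreal (KK \<alpha> / sqrt pi) * (\<integral>\<^sup>+ s\<in>{b<..}. ennreal (s powr (\<alpha> + 1/2)) \<partial>\<rho>)"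
    by (rule nn_integral_cmult) (simp add: measurable_cong_sets[OF sr refl])
  finally show ?thesis .
qed

lemma aux:
  assumes "0 \<le> x" "0 \<le> K" "K \<le> M"
  shows "ennreal (1 / sqrt pi) * ennreal (K * x) \<le> ennreal (M / sqrt pi) * ennreal x"
proof -
  have M0: "0 \<le> M" using assms by simp
  have "ennreal (1 / sqrt pi) * ennreal (K * x) = ennreal (K * x / sqrt pi)"
    using assms by (simp add: ennreal_mult[symmetric] del: ennreal_mult)
  also have "\<dots> \<le> ennreal (M * x / sqrt pi)"
    using assms by (intro ennreal_leI divide_right_mono mult_right_mono) auto
  also have "\<dots> = ennreal (M / sqrt pi) * ennreal x"
    using assms M0 by (simp add: ennreal_mult[symmetric] del: ennreal_mult)
  finally show ?thesis .
qed

lemma K2_nonneg: "\<alpha> > -1 \<Longrightarrow> b > 0 \<Longrightarrow> K2 \<alpha> b \<ge> 0"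
  unfolding K2_def by (simp add: le_max_iff_disj)

lemma ineq2:
  assumes a: "\<alpha> > -1" and b: "b > 0" and mp: "measure_on_pos \<rho>" and df: "frakA_definable \<rho>"
  shows "(\<integral>\<^sup>+ u\<in>{0<..b}. ennreal (u powr \<alpha>) \<partial>frakA \<rho>)
        \<le> ennreal (max (KK \<alpha>) (K2 \<alpha> b) / sqrt pi) * ((\<integral>\<^sup>+ s\<in>{0<..b}. ennreal (s powr (\<alpha> + 1/2)) \<partial>\<rho>)
                        + (\<integral>\<^sup>+ s\<in>{b<..}. ennreal (s powr (-1/2)) \<partial>\<rho>))"
proof -
  define C where "C = max (KK \<alpha>) (K2 \<alpha> b) / sqrt pi"
  have sr: "sets \<rho> = sets borel" using mp by (simp add: measure_on_pos_def)
  have "(\<integral>\<^sup>+ u\<in>{0<..b}. ennreal (u powr \<alpha>) \<partial>frakA \<rho>)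
     = (\<integral>\<^sup>+ s. (\<integral>\<^sup>+ u. ennreal (u powr \<alpha>) * indicator {0<..b} u * (indicator {0<..} u * kern u s) \<partial>lborel) \<partial>\<rho>)"
    by (rule G[OF mp df]) measurable
  also have "\<dots> \<le> (\<integral>\<^sup>+ s. ennreal C * (ennreal (s powr (\<alpha> + 1/2)) * indicator {0<..b} s
                  + ennreal (s powr (-1/2)) * indicator {b<..} s) \<partial>\<rho>)"
  proof (rule nn_integral_mono)
    fix s
    have eq: "ennreal (u powr \<alpha>) * indicator {0<..b} u * (indicator {0<..} u * kern u s)
       = ennreal (1 / sqrt pi) * ennreal (indicator {0<..b} u * (indicator {0<..<s} u * (u powr \<alpha> / sqrt (s - u))))" for u
      unfolding P by (cases "u \<in> {0<..b}"; cases "u \<in> {0<..<s}") (auto simp: ennreal_mult[symmetric] simp del: ennreal_mult)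
    have m: "(\<lambda>u. ennreal (indicator {0<..b} u * (indicator {0<..<s} u * (u powr \<alpha> / sqrt (s - u))))) \<in> borel_measurable lborel"
      by measurable
    have "(\<integral>\<^sup>+ u. ennreal (u powr \<alpha>) * indicator {0<..b} u * (indicator {0<..} u * kern u s) \<partial>lborel)
        = ennreal (1 / sqrt pi) * (\<integral>\<^sup>+ u. ennreal (indicator {0<..b} u * (indicator {0<..<s} u * (u powr \<alpha> / sqrt (s - u)))) \<partial>lborel)"
      unfolding eq by (rule nn_integral_cmult[OF m])
    also have "\<dots> \<le> ennreal C * (ennreal (s powr (\<alpha> + 1/2)) * indicator {0<..b} s
                  + ennreal (s powr (-1/2)) * indicator {b<..} s)"
    proof -
      consider "s \<le> 0" | "0 < s" "s \<le> b" | "b < s" by linarith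
      thus ?thesis
      proof cases
        case 1
        have "(\<integral>\<^sup>+ u. ennreal (indicator {0<..b} u * (indicator {0<..<s} u * (u powr \<alpha> / sqrt (s - u)))) \<partial>lborel)
            = (\<integral>\<^sup>+ u. 0 \<partial>(lborel::real measure))"
        proof (rule nn_integral_cong)
          fix u
          have z: "indicator {0<..<s} u = (0::real)" using 1 by (auto simp: indicator_def)
          show "ennreal (indicator {0<..b} u * (indicator {0<..<s} u * (u powr \<alpha> / sqrt (s - u)))) = 0"
            by (simp only: z ennreal_0 mult_zero_right mult_zero_left)
        qed
        thus ?thesis by simp
      next
        case 2
        have "(\<integral>\<^sup>+ u. ennreal (indicator {0<..b} u * (indicator {0<..<s} u * (u powr \<alpha> / sqrt (s - u)))) \<partial>lborel)
            \<le> (\<integral>\<^sup>+ u. ennreal (indicator {0<..<s} u * (u powr \<alpha> / sqrt (s - u))) \<partial>lborel)"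
          by (intro nn_integral_mono ennreal_leI) (auto simp: indicator_def)
        also have "\<dots> \<le> ennreal (KK \<alpha> * s powr (\<alpha> + 1/2))" using L1[OF a] 2 by simp
        finally have "ennreal (1 / sqrt pi) * (\<integral>\<^sup>+ u. ennreal (indicator {0<..b} u * (indicator {0<..<s} u * (u powr \<alpha> / sqrt (s - u)))) \<partial>lborel)
            \<le> ennreal (1 / sqrt pi) * ennreal (KK \<alpha> * s powr (\<alpha> + 1/2))" by (rule mult_left_mono) simp
        also have "\<dots> \<le> ennreal C * ennreal (s powr (\<alpha> + 1/2))"
          unfolding C_def by (rule aux) (use KK_nonneg[OF a] in auto)
        also have "\<dots> = ennreal C * (ennreal (s powr (\<alpha> + 1/2)) * indicator {0<..b} s
                  + ennreal (s powr (-1/2)) * indicator {b<..} s)"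
          using 2 by simp
        finally show ?thesis .
      next
        case 3
        have "(\<integral>\<^sup>+ u. ennreal (indicator {0<..b} u * (indicator {0<..<s} u * (u powr \<alpha> / sqrt (s - u)))) \<partial>lborel)
            \<le> (\<integral>\<^sup>+ u. ennreal (indicator {0<..b} u * (u powr \<alpha> / sqrt (s - u))) \<partial>lborel)"
          using 3 by (intro nn_integral_mono ennreal_leI) (auto simp: indicator_def)
        also have "\<dots> \<le> ennreal (K2 \<alpha> b * s powr (-1/2))" using L3[OF a b 3] by simp
        finally have "ennreal (1 / sqrt pi) * (\<integral>\<^sup>+ u. ennreal (indicator {0<..b} u * (indicator {0<..<s} u * (u powr \<alpha> / sqrt (s - u)))) \<partial>lborel)
            \<le> ennreal (1 / sqrt pi) * ennreal (K2 \<alpha> b * s powr (-1/2))" by (rule mult_left_mono) simp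
        also have "\<dots> \<le> ennreal C * ennreal (s powr (-1/2))"
          unfolding C_def by (rule aux) (use K2_nonneg[OF a b] in auto)
        also have "\<dots> = ennreal C * (ennreal (s powr (\<alpha> + 1/2)) * indicator {0<..b} s
                  + ennreal (s powr (-1/2)) * indicator {b<..} s)"
          using 3 by simp
        finally show ?thesis .
      qed
    qed
    finally show "(\<integral>\<^sup>+ u. ennreal (u powr \<alpha>) * indicator {0<..b} u * (indicator {0<..} u * kern u s) \<partial>lborel)
        \<le> ennreal C * (ennreal (s powr (\<alpha> + 1/2)) * indicator {0<..b} s
                  + ennreal (s powr (-1/2)) * indicator {b<..} s)" .
  qed
  also have "\<dots> = ennreal C * (\<integral>\<^sup>+ s. ennreal (s powr (\<alpha> + 1/2)) * indicator {0<..b} s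
                  + ennreal (s powr (-1/2)) * indicator {b<..} s \<partial>\<rho>)"
    by (rule nn_integral_cmult) (simp add: measurable_cong_sets[OF sr refl])
  also have "(\<integral>\<^sup>+ s. ennreal (s powr (\<alpha> + 1/2)) * indicator {0<..b} s
                  + ennreal (s powr (-1/2)) * indicator {b<..} s \<partial>\<rho>)
     = (\<integral>\<^sup>+ s\<in>{0<..b}. ennreal (s powr (\<alpha> + 1/2)) \<partial>\<rho>) + (\<integral>\<^sup>+ s\<in>{b<..}. ennreal (s powr (-1/2)) \<partial>\<rho>)"
    by (rule nn_integral_add) (simp_all add: measurable_cong_sets[OF sr refl])
  finally show ?thesis unfolding C_def .
qed

theorem lemma2p7:
  fixes \<alpha> b :: real
  assumes "\<alpha> > -1" and "b > 0"
  shows "\<exists>C1 C2 :: real. \<forall>\<rho>. measure_on_pos \<rho> \<longrightarrow> frakA_definable \<rho> \<longrightarrow>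
      (\<integral>\<^sup>+ u\<in>{b<..}. ennreal (u powr \<alpha>) \<partial>frakA \<rho>)
        \<le> ennreal C1 * (\<integral>\<^sup>+ s\<in>{b<..}. ennreal (s powr (\<alpha> + 1/2)) \<partial>\<rho>)
    \<and> (\<integral>\<^sup>+ u\<in>{0<..b}. ennreal (u powr \<alpha>) \<partial>frakA \<rho>)
        \<le> ennreal C2 * ((\<integral>\<^sup>+ s\<in>{0<..b}. ennreal (s powr (\<alpha> + 1/2)) \<partial>\<rho>)
                        + (\<integral>\<^sup>+ s\<in>{b<..}. ennreal (s powr (-1/2)) \<partial>\<rho>))"
  using ineq1[OF assms] ineq2[OF assms] by blast

end
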